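(* Let $(X,\circ,\bullet)$ be a right-hand skew Boolean algebra. Let $B=X/\gamma$, where $\gamma$ is Green's relation $\mathscr R$ of $(X,\circ)$, with the Boolean algebra structure induced by $\circ$, $\bullet$ and $0$, and let $p\colon X\to B$ be the quotient map. For $x\in X$ and $b\le p(x)$ in $B$ put $x|^{p(x)}_b=y\circ x$ for any $y$ with $p(y)=b$. Then $p\colon X\to B$ is a Boolean set, whose order is the natural partial order of $X$ ($x\le y$ iff $x=x\circ y$).
   Context: A right-hand skew Boolean algebra is $(X,\circ,\bullet)$ where $(X,\circ)$, $(X,\bullet)$ are bands such that: (SB1) $x\circ(x\bullet y)=x=(y\bullet x)\circ x$ and $x\bullet(x\circ y)=x=(y\circ x)\bullet x$; (SB2) $x\circ y\circ x=y\circ x$ and $x\bullet y\bullet x=x\bullet y$; (SB3) $x\bullet y=y\bullet x$ iff $x\circ y=y\circ x$; (SB4) there is $0$ with $0\circ x=0=x\circ 0$; (SB5) each $x^{\downarrow}=\{x\circ s\circ x:s\in X\}$ is a Boolean algebra with top element. Known facts: $(X,\circ)$ is a right normal band; the minimum semilattice congruence $\gamma$ (equal to $\mathscr R$ for $\circ$) is the same for $\circ$ and $\bullet$, and $X/\gamma$ is a Boolean algebra under the induced operations. Convention: a "Boolean algebra" means a generalized Boolean algebra (relatively complemented distributive lattice with $0$). Presheaf of sets over a meet semilattice $E$: pairwise disjoint sets $X_e$, restriction maps $x\mapsto x|^e_f$ for $e\ge f$ with $|^e_e=\mathrm{id}$ and $(x|^e_f)|^f_g=x|^e_g$; global support: all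 $X_e\ne\emptyset$. Order: $x\le y$ iff $p(x)\le p(y)$ and $x=y|^{p(y)}_{p(x)}$. Compatibility $x\sim y$: $x\wedge y$ exists and $p(x\wedge y)=p(x)\wedge p(y)$. A Boolean set is a presheaf with global support over a Boolean algebra with a least element $0$ in $(X,\le)$, joins of all compatible pairs, and $p(x)=0\Rightarrow x=0$. *)

theory Defs
  imports Main
begin

definition partial_order_on' :: "'b set \<Rightarrow> ('b \<Rightarrow> 'b \<Rightarrow> bool) \<Rightarrow> bool" where
  "partial_order_on' A le \<longleftrightarrow>
     (\<forall>a\<in>A. le a a) \<and>
     (\<forall>a\<in>A. \<forall>b\<in>A. le a b \<and> le b a \<longrightarrow> a = b) \<and>
     (\<forall>a\<in>A. \<forall>b\<in>A. \<forall>c\<in>A. le a b \<and> le b c \<longrightarrow> le a c)"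

definition is_inf_in :: "'b set \<Rightarrow> ('b \<Rightarrow> 'b \<Rightarrow> bool) \<Rightarrow> 'b \<Rightarrow> 'b \<Rightarrow> 'b \<Rightarrow> bool" where
  "is_inf_in A le x y m \<longleftrightarrow> m \<in> A \<and> le m x \<and> le m y \<and>
     (\<forall>z\<in>A. le z x \<and> le z y \<longrightarrow> le z m)"

definition is_sup_in :: "'b set \<Rightarrow> ('b \<Rightarrow> 'b \<Rightarrow> bool) \<Rightarrow> 'b \<Rightarrow> 'b \<Rightarrow> 'b \<Rightarrow> bool" where
  "is_sup_in A le x y m \<longleftrightarrow> m \<in> A \<and> le x m \<and> le y m \<and>
     (\<forall>z\<in>A. le x z \<and> le y z \<longrightarrow> le m z)"

definition is_least_in :: "'b set \<Rightarrow> ('b \<Rightarrow> 'b \<Rightarrow> bool) \<Rightarrow> 'b \<Rightarrow> bool" where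
  "is_least_in A le z \<longleftrightarrow> z \<in> A \<and> (\<forall>a\<in>A. le z a)"

definition is_greatest_in :: "'b set \<Rightarrow> ('b \<Rightarrow> 'b \<Rightarrow> bool) \<Rightarrow> 'b \<Rightarrow> bool" where
  "is_greatest_in A le t \<longleftrightarrow> t \<in> A \<and> (\<forall>a\<in>A. le a t)"

definition meet_in :: "'b set \<Rightarrow> ('b \<Rightarrow> 'b \<Rightarrow> bool) \<Rightarrow> 'b \<Rightarrow> 'b \<Rightarrow> 'b" where
  "meet_in A le x y = (THE m. is_inf_in A le x y m)"

definition join_in :: "'b set \<Rightarrow> ('b \<Rightarrow> 'b \<Rightarrow> bool) \<Rightarrow> 'b \<Rightarrow> 'b \<Rightarrow> 'b" where
  "join_in A le x y = (THE m. is_sup_in A le x y m)"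

definition meet_semilattice_on :: "'b set \<Rightarrow> ('b \<Rightarrow> 'b \<Rightarrow> bool) \<Rightarrow> bool" where
  "meet_semilattice_on A le \<longleftrightarrow> partial_order_on' A le \<and>
     (\<forall>x\<in>A. \<forall>y\<in>A. \<exists>m. is_inf_in A le x y m)"

definition gen_boolean_algebra_on :: "'b set \<Rightarrow> ('b \<Rightarrow> 'b \<Rightarrow> bool) \<Rightarrow> bool" where
  "gen_boolean_algebra_on A le \<longleftrightarrow>
     partial_order_on' A le \<and>
     (\<forall>x\<in>A. \<forall>y\<in>A. \<exists>m. is_inf_in A le x y m) \<and>
     (\<forall>x\<in>A. \<forall>y\<in>A. \<exists>m. is_sup_in A le x y m) \<and>
     (\<exists>z. is_least_in A le z) \<and>
     (\<forall>x\<in>A. \<forall>y\<in>A. \<forall>z\<in>A.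
        meet_in A le x (join_in A le y z) = join_in A le (meet_in A le x y) (meet_in A le x z)) \<and>
     (\<forall>a\<in>A. \<forall>b\<in>A. \<forall>c\<in>A. le a c \<and> le c b \<longrightarrow>
        (\<exists>d\<in>A. le a d \<and> le d b \<and> meet_in A le c d = a \<and> join_in A le c d = b))"

text \<open>A presheaf of sets over the meet semilattice \<open>(E, leE)\<close>, given by the total set \<open>X\<close>,
  the projection \<open>p\<close> (so \<open>X_e = {x \<in> X. p x = e}\<close>, automatically pairwise disjoint) and
  restriction \<open>restr x f = x|^{p x}_f\<close> for \<open>f \<le> p x\<close>.\<close>
definition presheaf_on ::
  "'b set \<Rightarrow> ('b \<Rightarrow> 'b \<Rightarrow> bool) \<Rightarrow> 'a set \<Rightarrow> ('a \<Rightarrow> 'b) \<Rightarrow> ('a \<Rightarrow> 'b \<Rightarrow> 'a) \<Rightarrow> bool" where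
  "presheaf_on E leE X p restr \<longleftrightarrow>
     meet_semilattice_on E leE \<and>
     (\<forall>x\<in>X. p x \<in> E) \<and>
     (\<forall>x\<in>X. \<forall>f\<in>E. leE f (p x) \<longrightarrow> restr x f \<in> X \<and> p (restr x f) = f) \<and>
     (\<forall>x\<in>X. restr x (p x) = x) \<and>
     (\<forall>x\<in>X. \<forall>f\<in>E. \<forall>g\<in>E. leE f (p x) \<and> leE g f \<longrightarrow> restr (restr x f) g = restr x g)"

definition global_support :: "'b set \<Rightarrow> 'a set \<Rightarrow> ('a \<Rightarrow> 'b) \<Rightarrow> bool" where
  "global_support E X p \<longleftrightarrow> (\<forall>e\<in>E. \<exists>x\<in>X. p x = e)"

definition presheaf_le ::
  "('b \<Rightarrow> 'b \<Rightarrow> bool) \<Rightarrow> ('a \<Rightarrow> 'b) \<Rightarrow> ('a \<Rightarrow> 'b \<Rightarrow> 'a) \<Rightarrow> 'a \<Rightarrow> 'a \<Rightarrow> bool" where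
  "presheaf_le leE p restr x y \<longleftrightarrow> leE (p x) (p y) \<and> x = restr y (p x)"

definition compatible ::
  "'b set \<Rightarrow> ('b \<Rightarrow> 'b \<Rightarrow> bool) \<Rightarrow> 'a set \<Rightarrow> ('a \<Rightarrow> 'b) \<Rightarrow> ('a \<Rightarrow> 'b \<Rightarrow> 'a) \<Rightarrow> 'a \<Rightarrow> 'a \<Rightarrow> bool" where
  "compatible E leE X p restr x y \<longleftrightarrow>
     (\<exists>m. is_inf_in X (presheaf_le leE p restr) x y m \<and> p m = meet_in E leE (p x) (p y))"

definition boolean_set ::
  "'b set \<Rightarrow> ('b \<Rightarrow> 'b \<Rightarrow> bool) \<Rightarrow> 'a set \<Rightarrow> ('a \<Rightarrow> 'b) \<Rightarrow> ('a \<Rightarrow> 'b \<Rightarrow> 'a) \<Rightarrow> bool" where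
  "boolean_set E leE X p restr \<longleftrightarrow>
     gen_boolean_algebra_on E leE \<and>
     presheaf_on E leE X p restr \<and>
     global_support E X p \<and>
     (\<exists>z. is_least_in X (presheaf_le leE p restr) z \<and>
        (\<forall>x\<in>X. is_least_in E leE (p x) \<longrightarrow> x = z)) \<and>
     (\<forall>x\<in>X. \<forall>y\<in>X. compatible E leE X p restr x y \<longrightarrow>
        (\<exists>j. is_sup_in X (presheaf_le leE p restr) x y j))"

definition band :: "('a \<Rightarrow> 'a \<Rightarrow> 'a) \<Rightarrow> bool" where
  "band f \<longleftrightarrow> (\<forall>x y z. f (f x y) z = f x (f y z)) \<and> (\<forall>x. f x x = x)"

definition nat_le :: "('a \<Rightarrow> 'a \<Rightarrow> 'a) \<Rightarrow> 'a \<Rightarrow> 'a \<Rightarrow> bool" where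
  "nat_le circ x y \<longleftrightarrow> x = circ x y"

definition down_set :: "('a \<Rightarrow> 'a \<Rightarrow> 'a) \<Rightarrow> 'a \<Rightarrow> 'a set" where
  "down_set circ x = {circ (circ x s) x | s. True}"

definition right_skew_boolean_algebra ::
  "('a \<Rightarrow> 'a \<Rightarrow> 'a) \<Rightarrow> ('a \<Rightarrow> 'a \<Rightarrow> 'a) \<Rightarrow> 'a \<Rightarrow> bool" where
  "right_skew_boolean_algebra circ bul zero \<longleftrightarrow>
     band circ \<and> band bul \<and>
     (\<forall>x y. circ x (bul x y) = x \<and> circ (bul y x) x = x) \<and>
     (\<forall>x y. bul x (circ x y) = x \<and> bul (circ y x) x = x) \<and>
     (\<forall>x y. circ (circ x y) x = circ y x) \<and>
     (\<forall>x y. bul (bul x y) x = bul x y) \<and>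
     (\<forall>x y. bul x y = bul y x \<longleftrightarrow> circ x y = circ y x) \<and>
     (\<forall>x. circ zero x = zero \<and> circ x zero = zero) \<and>
     (\<forall>x. let D = down_set circ x in
        gen_boolean_algebra_on D (nat_le circ) \<and>
        (\<exists>t. is_greatest_in D (nat_le circ) t) \<and>
        (\<forall>a\<in>D. \<forall>b\<in>D. is_inf_in D (nat_le circ) a b (circ a b) \<and>
                        is_sup_in D (nat_le circ) a b (bul a b)))"

text \<open>Green's relation \<open>\<R>\<close> of the band \<open>(X,\<circ>)\<close>: \<open>x X^1 = y X^1\<close>.\<close>
definition green_R :: "('a \<Rightarrow> 'a \<Rightarrow> 'a) \<Rightarrow> 'a \<Rightarrow> 'a \<Rightarrow> bool" where
  "green_R circ x y \<longleftrightarrow> (x = y \<or> (\<exists>s. x = circ y s)) \<and> (y = x \<or> (\<exists>t. y = circ x t))"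

definition gclass :: "('a \<Rightarrow> 'a \<Rightarrow> 'a) \<Rightarrow> 'a \<Rightarrow> 'a set" where
  "gclass circ x = {y. green_R circ x y}"

definition quotB :: "('a \<Rightarrow> 'a \<Rightarrow> 'a) \<Rightarrow> 'a set set" where
  "quotB circ = range (gclass circ)"

definition quot_le :: "('a \<Rightarrow> 'a \<Rightarrow> 'a) \<Rightarrow> 'a set \<Rightarrow> 'a set \<Rightarrow> bool" where
  "quot_le circ P Q \<longleftrightarrow>
     (\<exists>x y. P = gclass circ x \<and> Q = gclass circ y \<and> gclass circ (circ x y) = gclass circ x)"

definition quot_restr :: "('a \<Rightarrow> 'a \<Rightarrow> 'a) \<Rightarrow> 'a \<Rightarrow> 'a set \<Rightarrow> 'a" where
  "quot_restr circ x b = circ (SOME y. gclass circ y = b) x"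

end

theory Submission
  imports Defs
begin


lemma meet_in_eq:
  assumes "partial_order_on' A le" "is_inf_in A le x y m"
  shows "meet_in A le x y = m"
  unfolding meet_in_def
proof (rule the_equality)
  show "is_inf_in A le x y m" by fact
  fix m' assume "is_inf_in A le x y m'"
  with assms show "m' = m" unfolding is_inf_in_def partial_order_on'_def by metis
qed

lemma join_in_eq:
  assumes "partial_order_on' A le" "is_sup_in A le x y m"
  shows "join_in A le x y = m"
  unfolding join_in_def
proof (rule the_equality)
  show "is_sup_in A le x y m" by fact
  fix m' assume "is_sup_in A le x y m'"
  with assms show "m' = m" unfolding is_sup_in_def partial_order_on'_def by metis
qed

locale rsba =
  fixes c :: "'a \<Rightarrow> 'a \<Rightarrow> 'a" and b :: "'a \<Rightarrow> 'a \<Rightarrow> 'a" and z :: 'a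
  assumes A: "right_skew_boolean_algebra c b z"
begin

lemma assoc: "c (c x y) w = c x (c y w)" using A unfolding right_skew_boolean_algebra_def band_def by blast
lemma idem: "c x x = x" using A unfolding right_skew_boolean_algebra_def band_def by blast
lemma bassoc: "b (b x y) w = b x (b y w)" using A unfolding right_skew_boolean_algebra_def band_def by blast
lemma bidem: "b x x = x" using A unfolding right_skew_boolean_algebra_def band_def by blast
lemma ab1: "c x (b x y) = x" using A unfolding right_skew_boolean_algebra_def by blast
lemma ab2: "c (b y x) x = x" using A unfolding right_skew_boolean_algebra_def by blast
lemma ab3: "b x (c x y) = x" using A unfolding right_skew_boolean_algebra_def by blast
lemma ab4: "b (c y x) x = x" using A unfolding right_skew_boolean_algebra_def by blast
lemma rr: "c x (c y x) = c y x" using A assoc unfolding right_skew_boolean_algebra_def by metis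
lemma lr: "b x (b y x) = b x y" using A bassoc unfolding right_skew_boolean_algebra_def by metis
lemma sb3: "b x y = b y x \<longleftrightarrow> c x y = c y x" using A unfolding right_skew_boolean_algebra_def by blast
lemma z1: "c z x = z" using A unfolding right_skew_boolean_algebra_def by blast
lemma z2: "c x z = z" using A unfolding right_skew_boolean_algebra_def by blast
lemma Dax: "gen_boolean_algebra_on (down_set c w) (nat_le c) \<and>
        (\<forall>a\<in>down_set c w. \<forall>d\<in>down_set c w. is_inf_in (down_set c w) (nat_le c) a d (c a d) \<and>
                        is_sup_in (down_set c w) (nat_le c) a d (b a d))"
  using A unfolding right_skew_boolean_algebra_def Let_def by blast

lemma inD: "a \<in> down_set c w \<longleftrightarrow> c a w = a"
proof
  assume "a \<in> down_set c w"
  then obtain s where "a = c (c w s) w" unfolding down_set_def by blast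
  then show "c a w = a" by (simp add: assoc idem)
next
  assume "c a w = a"
  then have "a = c (c w a) w" by (metis assoc rr)
  then show "a \<in> down_set c w" unfolding down_set_def by blast
qed

lemma Dpo: "partial_order_on' (down_set c w) (nat_le c)"
  using Dax unfolding gen_boolean_algebra_on_def by blast

lemma Dinf: "c a w = a \<Longrightarrow> c d w = d \<Longrightarrow> is_inf_in (down_set c w) (nat_le c) a d (c a d)"
  using Dax inD by blast
lemma Dsup: "c a w = a \<Longrightarrow> c d w = d \<Longrightarrow> is_sup_in (down_set c w) (nat_le c) a d (b a d)"
  using Dax inD by blast

lemma Dcomm: assumes "c a w = a" "c d w = d" shows "c a d = c d a"
proof -
  have 1: "is_inf_in (down_set c w) (nat_le c) a d (c a d)" using Dinf assms by blast
  have 2: "is_inf_in (down_set c w) (nat_le c) d a (c d a)" using Dinf assms by blast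
  show ?thesis using meet_in_eq[OF Dpo 1] meet_in_eq[OF Dpo 2] 1 2 Dpo
    unfolding is_inf_in_def partial_order_on'_def by metis
qed

lemma Dbcomm: assumes "c a w = a" "c d w = d" shows "b a d = b d a"
proof -
  have 1: "is_sup_in (down_set c w) (nat_le c) a d (b a d)" using Dsup assms by blast
  have 2: "is_sup_in (down_set c w) (nat_le c) d a (b d a)" using Dsup assms by blast
  show ?thesis using 1 2 Dpo
    unfolding is_sup_in_def partial_order_on'_def by metis
qed

lemma RN: "c x (c y w) = c y (c x w)"
proof -
  have "c (c x w) (c y w) = c (c y w) (c x w)"
    by (rule Dcomm[where w=w]) (simp_all add: assoc idem)
  then show ?thesis by (simp add: assoc rr)
qed

lemma Dbclosed: "c a w = a \<Longrightarrow> c d w = d \<Longrightarrow> c (b a d) w = b a d"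
  using Dsup[of a w d] inD unfolding is_sup_in_def by blast

lemma Dle_sup: "c a w = a \<Longrightarrow> c d w = d \<Longrightarrow> c e w = e \<Longrightarrow> nat_le c a e \<Longrightarrow> nat_le c d e
   \<Longrightarrow> nat_le c (b a d) e"
  using Dsup[of a w d] inD unfolding is_sup_in_def by blast

lemma Ddist: assumes "c a w = a" "c d w = d" "c e w = e"
  shows "c a (b d e) = b (c a d) (c a e)"
proof -
  have g: "gen_boolean_algebra_on (down_set c w) (nat_le c)" using Dax by blast
  have cl: "\<And>u v. c u w = u \<Longrightarrow> c v w = v \<Longrightarrow> c (c u v) w = c u v" by (simp add: assoc)
  have mi: "\<And>u v. c u w = u \<Longrightarrow> c v w = v \<Longrightarrow> meet_in (down_set c w) (nat_le c) u v = c u v"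
    using meet_in_eq[OF Dpo Dinf] by blast
  have ji: "\<And>u v. c u w = u \<Longrightarrow> c v w = v \<Longrightarrow> join_in (down_set c w) (nat_le c) u v = b u v"
    using join_in_eq[OF Dpo Dsup] by blast
  have "meet_in (down_set c w) (nat_le c) a (join_in (down_set c w) (nat_le c) d e) =
        join_in (down_set c w) (nat_le c) (meet_in (down_set c w) (nat_le c) a d) (meet_in (down_set c w) (nat_le c) a e)"
    using g assms inD unfolding gen_boolean_algebra_on_def by blast
  then show ?thesis using assms by (simp add: mi ji cl Dbclosed)
qed

lemma Dcompl: assumes "c a w = a" "c d w = d" "c e w = e" "nat_le c a e" "nat_le c e d"
  shows "\<exists>f. c f w = f \<and> nat_le c a f \<and> nat_le c f d \<and> c e f = a \<and> b e f = d"
proof -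
  have g: "gen_boolean_algebra_on (down_set c w) (nat_le c)" using Dax by blast
  have mi: "\<And>u v. c u w = u \<Longrightarrow> c v w = v \<Longrightarrow> meet_in (down_set c w) (nat_le c) u v = c u v"
    using meet_in_eq[OF Dpo Dinf] by blast
  have ji: "\<And>u v. c u w = u \<Longrightarrow> c v w = v \<Longrightarrow> join_in (down_set c w) (nat_le c) u v = b u v"
    using join_in_eq[OF Dpo Dsup] by blast
  obtain f where f: "f \<in> down_set c w" "nat_le c a f" "nat_le c f d"
     "meet_in (down_set c w) (nat_le c) e f = a" "join_in (down_set c w) (nat_le c) e f = d"
    using g assms inD unfolding gen_boolean_algebra_on_def by blast
  then show ?thesis using assms mi ji inD by metis
qed

end

context rsba begin

lemma half: "(x = y \<or> (\<exists>s. x = c y s)) \<longleftrightarrow> c y x = x"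
proof
  assume "x = y \<or> (\<exists>s. x = c y s)"
  then show "c y x = x"
  proof
    assume "x = y" then show ?thesis by (simp add: idem)
  next
    assume "\<exists>s. x = c y s" then obtain s where "x = c y s" by blast
    then show ?thesis by (simp add: assoc[symmetric] idem)
  qed
next
  assume "c y x = x" then have "x = c y x" by simp
  then show "x = y \<or> (\<exists>s. x = c y s)" by blast
qed

lemma Rchar: "green_R c x y \<longleftrightarrow> c y x = x \<and> c x y = y"
  unfolding green_R_def half ..

lemma gc_eq: "gclass c x = gclass c y \<longleftrightarrow> c y x = x \<and> c x y = y"
proof
  assume e: "gclass c x = gclass c y"
  have "y \<in> gclass c y" unfolding gclass_def by (simp add: Rchar idem)
  then have "y \<in> gclass c x" using e by simp
  then show "c y x = x \<and> c x y = y" unfolding gclass_def mem_Collect_eq Rchar .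
next
  assume h: "c y x = x \<and> c x y = y"
  have "\<And>u. (c u x = x \<and> c x u = u) \<longleftrightarrow> (c u y = y \<and> c y u = u)"
  proof
    fix u assume u: "c u x = x \<and> c x u = u"
    have "c u y = c u (c x y)" using h by simp
    also have "\<dots> = c (c u x) y" by (simp only: assoc)
    also have "\<dots> = y" using u h by simp
    finally have 1: "c u y = y" .
    have "c y u = c y (c x u)" using u by simp
    also have "\<dots> = c (c y x) u" by (simp only: assoc)
    also have "\<dots> = u" using u h by simp
    finally show "c u y = y \<and> c y u = u" using 1 by simp
  next
    fix u assume u: "c u y = y \<and> c y u = u"
    have "c u x = c u (c y x)" using h by simp
    also have "\<dots> = c (c u y) x" by (simp only: assoc)
    also have "\<dots> = x" using u h by simp
    finally have 1: "c u x = x" .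
    have "c x u = c x (c y u)" using u by simp
    also have "\<dots> = c (c x y) u" by (simp only: assoc)
    also have "\<dots> = u" using u h by simp
    finally show "c u x = x \<and> c x u = u" using 1 by simp
  qed
  then show "gclass c x = gclass c y"
    unfolding gclass_def Rchar by blast
qed

lemma Rsame: assumes "c y x = x" "c x y = y" shows "c y w = c x w"
proof -
  have "c x w = c (c y x) w" using assms by simp
  also have "\<dots> = c y (c x w)" by (simp add: assoc)
  also have "\<dots> = c x (c y w)" by (rule RN)
  also have "\<dots> = c y w" using assms by (simp add: assoc[symmetric])
  finally show ?thesis by simp
qed

lemma le0_inv: assumes "c y x = x" "c x' x = x" "c x x' = x'" "c y' y = y" "c y y' = y'"
  shows "c y' x' = x'"
proof -
  have "c y' x' = c y' (c (c y x) x')" by (simp only: assms(1) assms(3))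
  also have "\<dots> = c (c y' y) (c x x')" by (simp add: assoc)
  also have "\<dots> = c (c y x) x'" by (simp only: assms(4) assoc)
  also have "\<dots> = x'" by (simp only: assms(1) assms(3))
  finally show ?thesis .
qed

lemma qle: "quot_le c (gclass c x) (gclass c y) \<longleftrightarrow> c y x = x"
proof
  assume "quot_le c (gclass c x) (gclass c y)"
  then obtain x' y' where h: "gclass c x = gclass c x'" "gclass c y = gclass c y'"
     "gclass c (c x' y') = gclass c x'" unfolding quot_le_def by blast
  then have "c (c x' y') x' = x'" unfolding gc_eq by blast
  then have "c y' x' = x'" by (simp add: assoc rr)
  moreover have "c x' x = x" "c x x' = x'" using h(1) unfolding gc_eq by auto
  moreover have "c y' y = y" "c y y' = y'" using h(2) unfolding gc_eq by auto
  ultimately show "c y x = x" using le0_inv[of y' x' x y] by blast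
next
  assume h: "c y x = x"
  have "c (c x y) x = x" using h by (simp add: assoc rr idem)
  moreover have "c x (c x y) = c x y" by (simp add: assoc[symmetric] idem)
  ultimately have "gclass c (c x y) = gclass c x" unfolding gc_eq by blast
  then show "quot_le c (gclass c x) (gclass c y)" unfolding quot_le_def by blast
qed

lemma RL: "(c y x = x \<and> c x y = y) \<longleftrightarrow> (b x y = x \<and> b y x = y)"
proof
  assume h: "c y x = x \<and> c x y = y"
  have "b x y = x" using ab3[of x y] h by simp
  moreover have "b y x = y" using ab3[of y x] h by simp
  ultimately show "b x y = x \<and> b y x = y" by simp
next
  assume h: "b x y = x \<and> b y x = y"
  have "c y x = x" using ab2[of y x] h by simp
  moreover have "c x y = y" using ab2[of x y] h by simp
  ultimately show "c y x = x \<and> c x y = y" by simp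
qed

lemma cong_cr: assumes "c a' a = a" "c a a' = a'" shows "gclass c (c a d) = gclass c (c a' d)"
proof -
  have 1: "c (c a' d) (c a d) = c a d"
  proof -
    have "c (c a' d) (c a d) = c a' (c d (c a d))" by (simp add: assoc)
    also have "\<dots> = c a' (c a d)" by (simp add: rr)
    also have "\<dots> = c a d" using assms by (simp add: assoc[symmetric])
    finally show ?thesis .
  qed
  have 2: "c (c a d) (c a' d) = c a' d"
  proof -
    have "c (c a d) (c a' d) = c a (c d (c a' d))" by (simp add: assoc)
    also have "\<dots> = c a (c a' d)" by (simp add: rr)
    also have "\<dots> = c a' d" using assms by (simp add: assoc[symmetric])
    finally show ?thesis .
  qed
  show ?thesis unfolding gc_eq using 1 2 by simp
qed

lemma cong_cl: assumes "c d' d = d" "c d d' = d'" shows "gclass c (c a d) = gclass c (c a d')"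
proof -
  have 1: "c (c a d') (c a d) = c a d"
  proof -
    have "c (c a d') (c a d) = c (c a (c d' a)) d" by (simp add: assoc)
    also have "\<dots> = c (c d' a) d" by (simp add: rr)
    also have "\<dots> = c a (c d' d)" by (simp add: assoc RN)
    also have "\<dots> = c a d" using assms by simp
    finally show ?thesis .
  qed
  have 2: "c (c a d) (c a d') = c a d'"
  proof -
    have "c (c a d) (c a d') = c (c a (c d a)) d'" by (simp add: assoc)
    also have "\<dots> = c (c d a) d'" by (simp add: rr)
    also have "\<dots> = c a (c d d')" by (simp add: assoc RN)
    also have "\<dots> = c a d'" using assms by simp
    finally show ?thesis .
  qed
  show ?thesis unfolding gc_eq using 1 2 by simp
qed

lemma cong_c: "gclass c a = gclass c a' \<Longrightarrow> gclass c d = gclass c d' \<Longrightarrow>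
   gclass c (c a d) = gclass c (c a' d')"
proof -
  assume "gclass c a = gclass c a'" "gclass c d = gclass c d'"
  then have h: "c a' a = a" "c a a' = a'" "c d' d = d" "c d d' = d'" unfolding gc_eq by auto
  have "gclass c (c a d) = gclass c (c a' d)" by (rule cong_cr[OF h(1) h(2)])
  moreover have "gclass c (c a' d) = gclass c (c a' d')" by (rule cong_cl[OF h(3) h(4)])
  ultimately show ?thesis by simp
qed

lemma cong_bl: assumes "b d d' = d" shows "b (b a d) (b a d') = b a d"
proof -
  have "b (b a d) (b a d') = b (b (b a d) a) d'" by (simp add: bassoc)
  also have "\<dots> = b (b a d) d'" using lr[of a d] by (simp add: bassoc)
  also have "\<dots> = b a d" using assms by (simp add: bassoc)
  finally show ?thesis .
qed
lemma cong_br: assumes "b a a' = a" shows "b (b a d) (b a' d) = b a d"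
proof -
  have "b (b a d) (b a' d) = b (b (b a a') d) (b a' d)" using assms by simp
  also have "\<dots> = b a (b (b a' d) (b a' d))" by (simp add: bassoc)
  also have "\<dots> = b a (b a' d)" by (simp add: bidem)
  also have "\<dots> = b a d" using assms by (simp add: bassoc[symmetric])
  finally show ?thesis .
qed
lemma cong_b: assumes h1: "gclass c a = gclass c a'" and h2: "gclass c d = gclass c d'"
  shows "gclass c (b a d) = gclass c (b a' d')"
proof -
  have 1: "gclass c (b a d) = gclass c (b a d')"
    using h2 unfolding gc_eq RL using cong_bl by blast
  have 2: "gclass c (b a d') = gclass c (b a' d')"
    using h1 unfolding gc_eq RL using cong_br by blast
  show ?thesis using 1 2 by simp
qed

end

context rsba begin

lemma le0_trans: assumes "c y x = x" "c u y = y" shows "c u x = x"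
proof -
  have "c u x = c u (c y x)" using assms(1) by simp
  also have "\<dots> = c (c u y) x" by (simp only: assoc)
  also have "\<dots> = x" using assms by simp
  finally show ?thesis .
qed

lemma le0_sup1: "c (b x y) x = x"
proof -
  have "b (b x y) x = b x y" using lr[of x y] by (simp add: bassoc)
  then have "c (b x y) x = c (b (b x y) x) x" by simp
  also have "\<dots> = x" by (rule ab2)
  finally show ?thesis .
qed

lemma le0_sup2: "c (b x y) y = y" using ab2[where y=x and x=y] .

lemma Dinj: assumes "c a w = a" "c d w = d" "gclass c a = gclass c d" shows "a = d"
proof -
  have "c d a = a" "c a d = d" using assms(3) unfolding gc_eq by auto
  moreover have "c a d = c d a" using Dcomm assms(1,2) by blast
  ultimately show ?thesis by simp
qed

lemma sup_least: assumes hx: "c u x = x" and hy: "c u y = y" shows "c u (b x y) = b x y"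
proof -
  define w where "w = b x y"
  have xw: "c x w = x" unfolding w_def by (rule ab1)
  define y' where "y' = c y w"
  have y'w: "c y' w = y'" unfolding y'_def by (simp add: assoc idem)
  have "c y y' = y'" unfolding y'_def by (simp add: assoc[symmetric] idem)
  moreover have "c y' y = y" unfolding y'_def w_def using le0_sup2[of x y] by (simp add: assoc rr idem)
  ultimately have cy: "gclass c y' = gclass c y" unfolding gc_eq by simp
  then have "gclass c (b x y') = gclass c (b x y)" using cong_b by blast
  moreover have "c (b x y') w = b x y'" using Dbclosed xw y'w by blast
  moreover have "c w w = w" by (rule idem)
  ultimately have e: "b x y' = w" using Dinj unfolding w_def by blast
  have zw: "c (c u w) w = c u w" by (simp add: assoc idem)
  have 1: "nat_le c x (c u w)" unfolding nat_le_def
  proof -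
    have "c x (c u w) = c u (c x w)" by (rule RN)
    also have "\<dots> = x" using xw hx by simp
    finally show "x = c x (c u w)" by simp
  qed
  have 2: "nat_le c y' (c u w)" unfolding nat_le_def
  proof -
    have "c y' (c u w) = c y (c w (c u w))" unfolding y'_def by (simp add: assoc)
    also have "\<dots> = c y (c u w)" by (simp add: rr)
    also have "\<dots> = c u (c y w)" by (rule RN)
    also have "\<dots> = c (c u y) w" by (simp add: assoc)
    also have "\<dots> = y'" using hy unfolding y'_def by simp
    finally show "y' = c y' (c u w)" by simp
  qed
  have "nat_le c (b x y') (c u w)" using Dle_sup[OF xw y'w zw 1 2] .
  then have "w = c w (c u w)" using e unfolding nat_le_def by simp
  also have "\<dots> = c u w" by (rule rr)
  finally show ?thesis unfolding w_def by simp
qed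

lemma cls_w: assumes "c w x = x" shows "gclass c (c x w) = gclass c x"
proof -
  have 1: "c x (c x w) = c x w" by (simp add: assoc[symmetric] idem)
  have 2: "c (c x w) x = x" using rr[of x w] assms by (simp add: assoc idem)
  show ?thesis unfolding gc_eq using 1 2 by simp
qed

lemma rng_all: "(\<forall>P\<in>range g. Q P) \<longleftrightarrow> (\<forall>x. Q (g x))" by blast
lemma rng_ex: "(\<exists>P\<in>range g. Q P) \<longleftrightarrow> (\<exists>x. Q (g x))" by blast

lemma Qpo: "partial_order_on' (quotB c) (quot_le c)"
  unfolding partial_order_on'_def quotB_def rng_all qle
  by (auto simp: idem gc_eq intro: le0_trans)

lemma Qinf: "is_inf_in (quotB c) (quot_le c) (gclass c x) (gclass c y) (gclass c (c x y))"
proof -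
  have 1: "c x (c x y) = c x y" by (simp add: assoc[symmetric] idem)
  have 2: "c y (c x y) = c x y" by (rule rr)
  have 3: "\<And>u. c x u = u \<Longrightarrow> c y u = u \<Longrightarrow> c (c x y) u = u" by (simp add: assoc)
  show ?thesis unfolding is_inf_in_def quotB_def rng_all qle using 1 2 3 by blast
qed

lemma Qsup: "is_sup_in (quotB c) (quot_le c) (gclass c x) (gclass c y) (gclass c (b x y))"
  unfolding is_sup_in_def quotB_def rng_all qle
  by (auto simp: le0_sup1 le0_sup2 sup_least)

lemma Qmeet: "meet_in (quotB c) (quot_le c) (gclass c x) (gclass c y) = gclass c (c x y)"
  by (rule meet_in_eq[OF Qpo Qinf])
lemma Qjoin: "join_in (quotB c) (quot_le c) (gclass c x) (gclass c y) = gclass c (b x y)"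
  by (rule join_in_eq[OF Qpo Qsup])

lemma Qdist: "gclass c (c x (b y u)) = gclass c (b (c x y) (c x u))"
proof -
  define w where "w = b (b x y) u"
  have s1: "c (b (b x y) u) (b x y) = b x y" by (rule le0_sup1)
  have lx: "c w x = x" unfolding w_def using le0_trans[OF le0_sup1[where x=x and y=y] s1] .
  have ly: "c w y = y" unfolding w_def using le0_trans[OF le0_sup2[where x=x and y=y] s1] .
  have lu: "c w u = u" unfolding w_def by (rule le0_sup2)
  have ex: "gclass c (c x w) = gclass c x" using cls_w lx .
  have ey: "gclass c (c y w) = gclass c y" using cls_w ly .
  have eu: "gclass c (c u w) = gclass c u" using cls_w lu .
  have d: "\<And>v. c (c v w) w = c v w" by (simp add: assoc idem)
  have "gclass c (c x (b y u)) = gclass c (c (c x w) (b (c y w) (c u w)))"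
    using cong_c[OF ex[symmetric] cong_b[OF ey[symmetric] eu[symmetric]]] .
  also have "\<dots> = gclass c (b (c (c x w) (c y w)) (c (c x w) (c u w)))"
    using Ddist[OF d d d] by simp
  also have "\<dots> = gclass c (b (c x y) (c x u))"
    using cong_b[OF cong_c[OF ex ey] cong_c[OF ex eu]] .
  finally show ?thesis .
qed

lemma Qcompl: assumes "c e a = a" "c d e = e"
  shows "\<exists>f. c f a = a \<and> c d f = f \<and> gclass c (c e f) = gclass c a \<and> gclass c (b e f) = gclass c d"
proof -
  define a' where "a' = c a d"
  define e' where "e' = c e d"
  have la: "c d a = a" using le0_trans[OF assms(1) assms(2)] .
  have ea: "gclass c a' = gclass c a" unfolding a'_def using cls_w la .
  have ee: "gclass c e' = gclass c e" unfolding e'_def using cls_w assms(2) .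
  have a'd: "c a' d = a'" unfolding a'_def by (simp add: assoc idem)
  have e'd: "c e' d = e'" unfolding e'_def by (simp add: assoc idem)
  have dd: "c d d = d" by (rule idem)
  have "c a' e' = c a (c d (c e d))" unfolding a'_def e'_def by (simp add: assoc)
  also have "\<dots> = c a (c e d)" by (simp add: rr)
  also have "\<dots> = c e (c a d)" by (rule RN)
  also have "\<dots> = a'" unfolding a'_def using assms(1) by (simp add: assoc[symmetric])
  finally have ae: "nat_le c a' e'" unfolding nat_le_def by simp
  have ed: "nat_le c e' d" unfolding nat_le_def using e'd by simp
  obtain f where f: "c f d = f" "nat_le c a' f" "nat_le c f d" "c e' f = a'" "b e' f = d"
    using Dcompl[OF a'd dd e'd ae ed] by blast
  have "c f a' = a'" using f(2) Dcomm[OF a'd f(1)] unfolding nat_le_def by simp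
  then have "quot_le c (gclass c a') (gclass c f)" using qle by blast
  then have "quot_le c (gclass c a) (gclass c f)" using ea by simp
  then have 1: "c f a = a" using qle by blast
  have 2: "c d f = f" using Dcomm[OF f(1) dd] f(1) by simp
  have 3: "gclass c (c e f) = gclass c a" using cong_c[OF ee[symmetric], of f f] f(4) ea by simp
  have 4: "gclass c (b e f) = gclass c d" using cong_b[OF ee[symmetric], of f f] f(5) by simp
  show ?thesis using 1 2 3 4 by blast
qed

lemma QBA: "gen_boolean_algebra_on (quotB c) (quot_le c)"
  unfolding gen_boolean_algebra_on_def
proof (intro conjI)
  show "partial_order_on' (quotB c) (quot_le c)" by (rule Qpo)
  show "\<forall>x\<in>quotB c. \<forall>y\<in>quotB c. \<exists>m. is_inf_in (quotB c) (quot_le c) x y m"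
    using Qinf unfolding quotB_def rng_all by blast
  show "\<forall>x\<in>quotB c. \<forall>y\<in>quotB c. \<exists>m. is_sup_in (quotB c) (quot_le c) x y m"
    using Qsup unfolding quotB_def rng_all by blast
  have "is_least_in (quotB c) (quot_le c) (gclass c z)"
    unfolding is_least_in_def quotB_def rng_all qle using z2 by blast
  then show "\<exists>m. is_least_in (quotB c) (quot_le c) m" by blast
  show "\<forall>x\<in>quotB c. \<forall>y\<in>quotB c. \<forall>za\<in>quotB c.
       meet_in (quotB c) (quot_le c) x (join_in (quotB c) (quot_le c) y za) =
       join_in (quotB c) (quot_le c) (meet_in (quotB c) (quot_le c) x y) (meet_in (quotB c) (quot_le c) x za)"
    unfolding quotB_def rng_all Qmeet[unfolded quotB_def] Qjoin[unfolded quotB_def] by (intro allI) (rule Qdist)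
  show "\<forall>a\<in>quotB c. \<forall>ba\<in>quotB c. \<forall>ca\<in>quotB c. quot_le c a ca \<and> quot_le c ca ba \<longrightarrow>
       (\<exists>d\<in>quotB c. quot_le c a d \<and> quot_le c d ba \<and>
        meet_in (quotB c) (quot_le c) ca d = a \<and> join_in (quotB c) (quot_le c) ca d = ba)"
    unfolding quotB_def rng_all rng_ex qle Qmeet[unfolded quotB_def] Qjoin[unfolded quotB_def]
  proof (intro allI impI)
    fix x y u assume "c u x = x \<and> c y u = u"
    then show "\<exists>v. c v x = x \<and> c y v = v \<and> gclass c (c u v) = gclass c x \<and> gclass c (b u v) = gclass c y"
      using Qcompl[of u x y] by blast
  qed
qed

end

context rsba begin

lemma restr_eq: "quot_restr c y (gclass c x) = c x y"
proof -
  define u where "u = (SOME u. gclass c u = gclass c x)"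
  have "gclass c u = gclass c x" unfolding u_def by (rule someI) (rule refl)
  then have "c x u = u" "c u x = x" unfolding gc_eq by auto
  then have "c x y = c u y" by (rule Rsame)
  then show ?thesis unfolding quot_restr_def u_def by simp
qed

lemma psle: "presheaf_le (quot_le c) (gclass c) (quot_restr c) = nat_le c"
proof (intro ext)
  fix x y
  have "x = c x y \<Longrightarrow> c y x = x"
  proof -
    assume h: "x = c x y"
    have "c y x = c x (c y x)" by (rule rr[symmetric])
    also have "\<dots> = c (c x y) x" by (simp add: assoc)
    also have "\<dots> = x" using h[symmetric] by (simp add: idem)
    finally show "c y x = x" .
  qed
  then show "presheaf_le (quot_le c) (gclass c) (quot_restr c) x y = nat_le c x y"
    unfolding presheaf_le_def qle restr_eq nat_le_def by blast
qed

lemma Qms: "meet_semilattice_on (quotB c) (quot_le c)"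
  using QBA unfolding gen_boolean_algebra_on_def meet_semilattice_on_def by blast

lemma Qpre: "presheaf_on (quotB c) (quot_le c) UNIV (gclass c) (quot_restr c)"
  unfolding presheaf_on_def
proof (intro conjI)
  show "meet_semilattice_on (quotB c) (quot_le c)" by (rule Qms)
  show "\<forall>x\<in>UNIV. gclass c x \<in> quotB c" unfolding quotB_def by blast
  have "\<And>x y. c x y = y \<Longrightarrow> gclass c (c y x) = gclass c y"
  proof -
    fix x y assume h: "c x y = y"
    have 1: "c y (c y x) = c y x" by (simp add: assoc[symmetric] idem)
    have 2: "c (c y x) y = y" using rr[of y x] h by (simp add: assoc idem)
    show "gclass c (c y x) = gclass c y" unfolding gc_eq using 1 2 by simp
  qed
  then show "\<forall>x\<in>UNIV. \<forall>f\<in>quotB c. quot_le c f (gclass c x) \<longrightarrow>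
      quot_restr c x f \<in> UNIV \<and> gclass c (quot_restr c x f) = f"
    unfolding quotB_def rng_all qle restr_eq by blast
  show "\<forall>x\<in>UNIV. quot_restr c x (gclass c x) = x" by (simp add: restr_eq idem)
  have "\<And>x y u. c y u = u \<Longrightarrow> c u (c y x) = c u x"
  proof -
    fix x y u assume h: "c y u = u"
    have "c u (c y x) = c y (c u x)" by (rule RN)
    also have "\<dots> = c u x" using h by (simp add: assoc[symmetric])
    finally show "c u (c y x) = c u x" .
  qed
  then show "\<forall>x\<in>UNIV. \<forall>f\<in>quotB c. \<forall>g\<in>quotB c. quot_le c f (gclass c x) \<and> quot_le c g f \<longrightarrow>
      quot_restr c (quot_restr c x f) g = quot_restr c x g"
    unfolding quotB_def rng_all qle restr_eq by blast
qed

lemma compat_sup: assumes "compatible (quotB c) (quot_le c) UNIV (gclass c) (quot_restr c) x y"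
  shows "\<exists>j. is_sup_in UNIV (nat_le c) x y j"
proof -
  obtain m where m: "is_inf_in UNIV (nat_le c) x y m" "gclass c m = gclass c (c x y)"
    using assms unfolding compatible_def psle Qmeet by blast
  have mx: "c m x = m" and my: "c m y = m" using m(1) unfolding is_inf_in_def nat_le_def by auto
  have cyx: "gclass c (c x y) = gclass c (c y x)"
  proof -
    have xx: "\<And>p q. c p (c p q) = c p q" by (simp add: assoc[symmetric] idem)
    have 1: "c (c y x) (c x y) = c x y"
      by (simp only: assoc xx rr)
    have 2: "c (c x y) (c y x) = c y x"
      by (simp only: assoc xx rr)
    show ?thesis unfolding gc_eq using 1 2 by simp
  qed
  have a1: "c (c y x) x = c y x" by (simp add: assoc idem)
  have a2: "c (c x y) y = c x y" by (simp add: assoc idem)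
  have "m = c y x" using Dinj[OF mx a1] m(2) cyx by simp
  moreover have "m = c x y" using Dinj[OF my a2] m(2) by simp
  ultimately have "c x y = c y x" by simp
  then have bc: "b x y = b y x" using sb3 by blast
  have "is_sup_in UNIV (nat_le c) x y (b x y)"
    unfolding is_sup_in_def nat_le_def
  proof (intro conjI ballI impI)
    show "b x y \<in> UNIV" by simp
    show "x = c x (b x y)" by (simp add: ab1)
    show "y = c y (b x y)" by (simp add: bc ab1)
    fix u assume "x = c x u \<and> y = c y u"
    then show "b x y = c (b x y) u" using Dbclosed[of x u y] by simp
  qed
  then show ?thesis by blast
qed

lemma main:
  shows "(\<forall>x y y'. quot_le c (gclass c y) (gclass c x) \<and>
            gclass c y = gclass c y' \<longrightarrow> c y x = c y' x)
       \<and> boolean_set (quotB c) (quot_le c) UNIV (gclass c) (quot_restr c)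
       \<and> (\<forall>x y. presheaf_le (quot_le c) (gclass c) (quot_restr c) x y
                  \<longleftrightarrow> nat_le c x y)"
proof (intro conjI)
  show "\<forall>x y y'. quot_le c (gclass c y) (gclass c x) \<and>
            gclass c y = gclass c y' \<longrightarrow> c y x = c y' x"
  proof (intro allI impI)
    fix x y y' assume "quot_le c (gclass c y) (gclass c x) \<and> gclass c y = gclass c y'"
    then have "c y' y = y" "c y y' = y'" unfolding gc_eq by auto
    then show "c y x = c y' x" using Rsame[of y y' x] by simp
  qed
  show "\<forall>x y. presheaf_le (quot_le c) (gclass c) (quot_restr c) x y \<longleftrightarrow> nat_le c x y"
    by (simp add: psle)
  show "boolean_set (quotB c) (quot_le c) UNIV (gclass c) (quot_restr c)"
    unfolding boolean_set_def
  proof (intro conjI)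
    show "gen_boolean_algebra_on (quotB c) (quot_le c)" by (rule QBA)
    show "presheaf_on (quotB c) (quot_le c) UNIV (gclass c) (quot_restr c)" by (rule Qpre)
    show "global_support (quotB c) UNIV (gclass c)"
      unfolding global_support_def quotB_def by blast
    have "is_least_in UNIV (nat_le c) z"
      unfolding is_least_in_def nat_le_def by (simp add: z1)
    moreover have "\<forall>x\<in>UNIV. is_least_in (quotB c) (quot_le c) (gclass c x) \<longrightarrow> x = z"
      unfolding is_least_in_def quotB_def rng_all qle
    proof (intro ballI impI)
      fix x assume "gclass c x \<in> range (gclass c) \<and> (\<forall>y. c y x = x)"
      then have "c z x = x" by blast
      then show "x = z" using z1[of x] by simp
    qed
    ultimately show "\<exists>za. is_least_in UNIV (presheaf_le (quot_le c) (gclass c) (quot_restr c)) za \<and>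
       (\<forall>x\<in>UNIV. is_least_in (quotB c) (quot_le c) (gclass c x) \<longrightarrow> x = za)"
      unfolding psle by blast
    show "\<forall>x\<in>UNIV. \<forall>y\<in>UNIV. compatible (quotB c) (quot_le c) UNIV (gclass c) (quot_restr c) x y \<longrightarrow>
       (\<exists>j. is_sup_in UNIV (presheaf_le (quot_le c) (gclass c) (quot_restr c)) x y j)"
      unfolding psle using compat_sup by blast
  qed
qed

end

theorem proposition2p6:
  fixes circ bul :: "'a \<Rightarrow> 'a \<Rightarrow> 'a" and zero :: 'a
  assumes "right_skew_boolean_algebra circ bul zero"
  shows "(\<forall>x y y'. quot_le circ (gclass circ y) (gclass circ x) \<and>
            gclass circ y = gclass circ y' \<longrightarrow> circ y x = circ y' x)
       \<and> boolean_set (quotB circ) (quot_le circ) UNIV (gclass circ) (quot_restr circ)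
       \<and> (\<forall>x y. presheaf_le (quot_le circ) (gclass circ) (quot_restr circ) x y
                  \<longleftrightarrow> nat_le circ x y)"
  using rsba.main[OF rsba.intro[OF assms]] .


end
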